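(* Let $a,b>0$ with $a\in[30,\tfrac43b]$. Then $$\Big|\mathbb E_{x\sim\mathcal N(b,1)}\big[-\tfrac12\tanh''(ax)a^2+\tanh'(ax)ax\big]\Big|\le0.01.$$ *)

theory Defs
  imports "HOL-Probability.Probability"
begin

end

theory Submission imports Defs begin

lemma cosh_real_ne0: "cosh (x::real) \<noteq> 0"
  using cosh_real_pos[of x] by simp

lemma deriv_tanh_eq: "deriv tanh = (\<lambda>y::real. 1 - tanh y ^ 2)"
proof
  fix y :: real
  have "(tanh has_field_derivative 1 - tanh y ^ 2) (at y)"
    using has_field_derivative_tanh[of "\<lambda>x. x" y 1] cosh_real_ne0[of y]
    by (auto intro!: derivative_eq_intros)
  then show "deriv tanh y = 1 - tanh y ^ 2" by (rule DERIV_imp_deriv)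
qed

lemma deriv2_tanh_eq: "deriv (deriv tanh) = (\<lambda>y::real. - 2 * tanh y * (1 - tanh y ^ 2))"
proof
  fix y :: real
  have "((\<lambda>y. 1 - tanh y ^ 2) has_field_derivative - 2 * tanh y * (1 - tanh y ^ 2)) (at y)"
    using cosh_real_ne0[of y]
    by (auto intro!: derivative_eq_intros simp: power2_eq_square algebra_simps)
  then show "deriv (deriv tanh) y = - 2 * tanh y * (1 - tanh y ^ 2)"
    unfolding deriv_tanh_eq by (rule DERIV_imp_deriv)
qed

lemma sech_exp: "1 - tanh (y::real) ^ 2 = 4 / (exp y + exp (-y))^2"
proof -
  define u where "u = exp y + exp (-y)"
  define v where "v = exp y - exp (-y)"
  have p: "u > 0" unfolding u_def by (simp add: add_pos_pos)
  have uv: "u^2 - v^2 = 4" unfolding u_def v_def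
    by (simp add: power2_eq_square algebra_simps flip: exp_add)
  have "1 - (v/u)^2 = (u^2 - v^2)/u^2" using p by (simp add: field_simps)
  then show ?thesis unfolding tanh_altdef using uv unfolding u_def v_def by simp
qed

lemma sech_le: "y \<ge> 0 \<Longrightarrow> 1 - tanh (y::real) ^ 2 \<le> 4 / exp (2*y)"
proof -
  assume "y \<ge> 0"
  have "exp (2*y) = (exp y)^2" by (simp add: power2_eq_square flip: exp_add)
  also have "\<dots> \<le> (exp y + exp (-y))^2" by (intro power_mono) auto
  finally have "exp (2*y) \<le> (exp y + exp (-y))^2" .
  then show ?thesis unfolding sech_exp
    using add_pos_pos[OF exp_gt_zero[of y] exp_gt_zero[of "-y"]]
    by (intro divide_left_mono) (auto intro!: mult_pos_pos)
qed

lemma sech_nonneg: "0 \<le> 1 - tanh (y::real) ^ 2"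
  unfolding sech_exp by simp

lemma sech_le1: "1 - tanh (y::real) ^ 2 \<le> 1"
  by simp

lemma y_sech_pos: "y \<ge> 0 \<Longrightarrow> y * (1 - tanh (y::real) ^ 2) \<le> 1"
proof -
  assume y: "y \<ge> 0"
  have e: "exp (2*y) \<ge> (1+y)^2"
  proof -
    have "exp (2*y) = (exp y)^2" by (simp add: power2_eq_square flip: exp_add)
    moreover have "(1+y)^2 \<le> (exp y)^2" using y exp_ge_add_one_self[of y]
      by (intro power_mono) auto
    ultimately show ?thesis by simp
  qed
  have "y * (1 - tanh y ^ 2) \<le> y * (4 / exp (2*y))"
    using sech_le[OF y] y by (intro mult_left_mono) auto
  also have "\<dots> = 4*y / exp (2*y)" by simp
  also have "\<dots> \<le> 1"
  proof -
    have "(1+y)^2 - 4*y = (y-1)^2" by (simp add: power2_eq_square algebra_simps)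
    then have "4*y \<le> (1+y)^2" using zero_le_power2[of "y-1"] by linarith
    then show ?thesis using e by (simp add: divide_le_eq)
  qed
  finally show ?thesis .
qed

lemma y_sech_abs: "\<bar>y * (1 - tanh (y::real) ^ 2)\<bar> \<le> 1"
proof (cases "y \<ge> 0")
  case True then show ?thesis using y_sech_pos[of y] sech_nonneg[of y] by simp
next
  case False
  then have "(-y) * (1 - tanh (-y) ^ 2) \<le> 1" by (intro y_sech_pos) auto
  then show ?thesis using sech_nonneg[of y] False by (simp add: abs_mult)
qed


lemma exp_ge_pow4: "z \<ge> 0 \<Longrightarrow> (z/4)^4 \<le> exp (z::real)"
proof -
  assume z: "z \<ge> 0"
  have "exp z = (exp (z/4))^4" by (simp flip: exp_of_nat_mult)
  moreover have "z/4 \<le> exp (z/4)" using exp_ge_add_one_self[of "z/4"] by linarith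
  ultimately show ?thesis using z by (metis power_mono divide_nonneg_nonneg zero_le_numeral)
qed

lemma big_case:
  fixes a b x :: real
  assumes a: "30 \<le> a" "a \<le> 4/3*b" and x: "x \<ge> b/4"
  shows "\<bar>a^2 * tanh (a*x) * (1 - tanh (a*x)^2) + (1 - tanh (a*x)^2) * a * x\<bar> \<le> 0.005"
proof -
  define y where "y = a*x"
  define S where "S = 1 - tanh y ^ 2"
  have b: "3/4*a \<le> b" using a by simp
  have x2: "3/16*a \<le> x" using b x by linarith
  have "a * (3/16*a) \<le> a * x" using a x2 by (intro mult_left_mono) auto
  then have ya: "3/16*a^2 \<le> y" unfolding y_def by (simp add: power2_eq_square)
  have "30*30 \<le> a * a" using a by (intro mult_mono) auto
  then have a2: "a^2 \<ge> 900" by (simp add: power2_eq_square)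
  have y0: "y \<ge> 168" using ya a2 by linarith
  have a2y: "a^2 \<le> 16/3*y" using ya by linarith
  have S0: "0 \<le> S" "S \<le> 1" unfolding S_def using sech_nonneg[of y] by auto
  have S4: "S \<le> 4 / exp (2*y)" unfolding S_def using sech_le[of y] y0 by auto
  have T: "\<bar>tanh y\<bar> \<le> 1" using tanh_real_bounds[of y] by auto
  have e1: "\<bar>a^2 * tanh y * S\<bar> \<le> a^2 * S"
  proof -
    have "\<bar>a^2 * tanh y * S\<bar> = a^2 * S * \<bar>tanh y\<bar>" using S0 by (simp add: abs_mult)
    also have "\<dots> \<le> a^2 * S * 1" using T S0 by (intro mult_left_mono) auto
    finally show ?thesis by simp
  qed
  have e2: "\<bar>S * y\<bar> = S * y" using S0 y0 by simp
  have "\<bar>a^2 * tanh y * S + S * y\<bar> \<le> a^2 * S + S * y"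
    using e1 e2 abs_triangle_ineq[of "a^2 * tanh y * S" "S * y"] by linarith
  also have "\<dots> = (a^2 + y) * S" by (simp add: algebra_simps)
  also have "\<dots> \<le> (19/3*y) * S" using a2y S0 by (intro mult_right_mono) auto
  also have "\<dots> \<le> (19/3*y) * (4 / exp (2*y))" using S4 y0 by (intro mult_left_mono) auto
  also have "\<dots> = 76/3 * y / exp (2*y)" by simp
  also have "\<dots> \<le> 0.005"
  proof -
    have e: "(2*y/4)^4 \<le> exp (2*y)" using y0 by (intro exp_ge_pow4) auto
    have "168^3 \<le> y^3" using y0 by (intro power_mono) auto
    then have "y * 168^3 \<le> y * y^3" using y0 by (intro mult_left_mono) auto
    moreover have "(2*y/4)^4 = y * y^3 / 16" by (simp add: power_divide power_mult_distrib power4_eq_xxxx power3_eq_cube)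
    ultimately have "y * 168^3 / 16 \<le> (2*y/4)^4" by simp
    with e have "y * 168^3 / 16 \<le> exp (2*y)" by linarith
    then show ?thesis using y0 by (simp add: divide_le_eq)
  qed
  finally show ?thesis unfolding y_def S_def by (simp add: mult_ac)
qed


lemma small_case:
  fixes a b x :: real
  assumes a: "30 \<le> a" "a \<le> 4/3*b" and x: "x < b/4"
  shows "a^2 + 1 \<le> 0.005 * exp (3 * (x - b)^2 / 8)"
proof -
  define z where "z = 27 * b^2 / 128"
  have b: "3/4*a \<le> b" "b \<ge> 22" using a by simp_all
  have "3/4*b \<le> b - x" using x by simp
  then have "(3/4*b)^2 \<le> (b - x)^2" using b by (intro power_mono) auto
  then have zx: "z \<le> 3 * (x - b)^2 / 8" unfolding z_def by (simp add: power2_commute power_mult_distrib power_divide)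
  have "a * a \<le> (4/3*b) * (4/3*b)" using a by (intro mult_mono) auto
  then have a2: "a^2 \<le> 2048/243 * z" unfolding z_def by (simp add: power2_eq_square)
  have "22 * 22 \<le> b * b" using b by (intro mult_mono) auto
  then have z0: "z \<ge> 102" unfolding z_def by (simp add: power2_eq_square)
  have e: "(z/4)^4 \<le> exp z" using z0 by (intro exp_ge_pow4) auto
  have "102^3 \<le> z^3" using z0 by (intro power_mono) auto
  then have "z * 102^3 \<le> z * z^3" using z0 by (intro mult_left_mono) auto
  moreover have "(z/4)^4 = z * z^3 / 256" by (simp add: power_divide power4_eq_xxxx power3_eq_cube)
  ultimately have f1: "z * 102^3 / 256 \<le> exp z" using e by simp
  have f2: "exp z \<le> exp (3 * (x - b)^2 / 8)" using zx by simp
  have f3: "4145 * z \<le> exp z" using f1 z0 by simp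
  have f5: "200 * (a^2 + 1) \<le> 4145 * z" using a2 z0 by (simp add: algebra_simps)
  have f4: "200 * (a^2 + 1) \<le> exp (3 * (x - b)^2 / 8)" using f3 f2 f5 by linarith
  then show ?thesis by simp
qed

lemma F_bound:
  fixes a x :: real
  shows "\<bar>a^2 * tanh (a*x) * (1 - tanh (a*x)^2) + (1 - tanh (a*x)^2) * a * x\<bar> \<le> a^2 + 1"
proof -
  define y where "y = a*x"
  define S where "S = 1 - tanh y ^ 2"
  have S0: "0 \<le> S" "S \<le> 1" unfolding S_def using sech_nonneg[of y] by auto
  have T: "\<bar>tanh y\<bar> \<le> 1" using tanh_real_bounds[of y] by auto
  have e1: "\<bar>a^2 * tanh y * S\<bar> \<le> a^2"
  proof -
    have "\<bar>a^2 * tanh y * S\<bar> = a^2 * (\<bar>tanh y\<bar> * S)" using S0 by (simp add: abs_mult)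
    also have "\<dots> \<le> a^2 * 1" using T S0 by (intro mult_left_mono) (auto simp: mult_le_one)
    finally show ?thesis by simp
  qed
  have e2: "\<bar>S * y\<bar> \<le> 1" using y_sech_abs[of y] unfolding S_def by (simp add: mult_ac)
  have "\<bar>a^2 * tanh y * S + S * y\<bar> \<le> a^2 + 1"
    using e1 e2 abs_triangle_ineq[of "a^2 * tanh y * S" "S * y"] by linarith
  then show ?thesis unfolding y_def S_def by (simp add: mult_ac)
qed


lemma F_exp_bound:
  fixes a b x :: real
  assumes a: "30 \<le> a" "a \<le> 4/3*b"
  shows "\<bar>a^2 * tanh (a*x) * (1 - tanh (a*x)^2) + (1 - tanh (a*x)^2) * a * x\<bar> \<le> 0.005 * exp (3 * (x - b)^2 / 8)"
proof (cases "x < b/4")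
  case True
  then show ?thesis using F_bound[of a x] small_case[OF a True] by linarith
next
  case False
  have "1 \<le> exp (3 * (x - b)^2 / 8)" by simp
  then have h: "(0.005::real) \<le> 0.005 * exp (3 * (x - b)^2 / 8)" by simp
  have "b/4 \<le> x" using False by simp
  from big_case[OF a this] h show ?thesis by linarith
qed

lemma dens_bound:
  fixes a b x :: real
  assumes a: "30 \<le> a" "a \<le> 4/3*b"
  shows "\<bar>normal_density b 1 x * (a^2 * tanh (a*x) * (1 - tanh (a*x)^2) + (1 - tanh (a*x)^2) * a * x)\<bar>
     \<le> 0.01 * normal_density b 2 x"
proof -
  define F where "F = a^2 * tanh (a*x) * (1 - tanh (a*x)^2) + (1 - tanh (a*x)^2) * a * x"
  define q where "q = (x - b)^2"
  have Fb: "\<bar>F\<bar> \<le> 0.005 * exp (3 * q / 8)" unfolding F_def q_def by (rule F_exp_bound[OF a])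
  have "sqrt (2 * pi * 2^2) = sqrt ((2 * sqrt (2 * pi))^2)" by (simp add: power_mult_distrib)
  also have "\<dots> = 2 * sqrt (2 * pi)" by (simp only: real_sqrt_abs) simp
  finally have s: "sqrt (2 * pi * 2^2) = 2 * sqrt (2 * pi)" .
  have n1: "normal_density b 1 x = 1 / sqrt (2 * pi) * exp (- q / 2)"
    unfolding normal_density_def q_def by simp
  have n2: "normal_density b 2 x = 1 / (2 * sqrt (2 * pi)) * exp (- q / 8)"
    unfolding normal_density_def q_def s by simp
  have ee: "exp (- q / 2) * exp (3 * q / 8) = exp (- q / 8)" by (simp flip: exp_add)
  have p: "0 < 1 / sqrt (2 * pi) * exp (- q / 2)" by simp
  have "\<bar>normal_density b 1 x * F\<bar> = (1 / sqrt (2 * pi) * exp (- q / 2)) * \<bar>F\<bar>"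
    unfolding n1 using p by (simp add: abs_mult)
  also have "\<dots> \<le> (1 / sqrt (2 * pi) * exp (- q / 2)) * (0.005 * exp (3 * q / 8))"
    using p Fb by (intro mult_left_mono) auto
  also have "\<dots> = 0.005 / sqrt (2 * pi) * (exp (- q / 2) * exp (3 * q / 8))" by simp
  also have "\<dots> = 0.01 * normal_density b 2 x" unfolding ee n2 by simp
  finally show ?thesis unfolding F_def .
qed

theorem lemmaF5:
  fixes a b :: real
  assumes "a > 0" and "b > 0" and "30 \<le> a" and "a \<le> 4 / 3 * b"
  shows "\<bar>\<integral>x. (- (1/2) * deriv (deriv tanh) (a * x) * a\<^sup>2 + deriv tanh (a * x) * a * x)
            \<partial>(density lborel (normal_density b 1))\<bar> \<le> 0.01"
proof -
  define F where "F = (\<lambda>x::real. a^2 * tanh (a*x) * (1 - tanh (a*x)^2) + (1 - tanh (a*x)^2) * a * x)"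
  have eq: "(\<lambda>x. - (1/2) * deriv (deriv tanh) (a * x) * a\<^sup>2 + deriv tanh (a * x) * a * x) = F"
    unfolding F_def by (simp only: deriv2_tanh_eq) (simp add: deriv_tanh_eq algebra_simps)
  have cF: "continuous_on UNIV F" unfolding F_def by (intro continuous_intros) (auto simp: cosh_real_ne0)
  have mF: "F \<in> borel_measurable borel" by (rule borel_measurable_continuous_onI[OF cF])
  have mF': "F \<in> borel_measurable lborel" using mF by simp
  have int_eq: "(\<integral>x. F x \<partial>density lborel (normal_density b 1)) = (\<integral>x. normal_density b 1 x * F x \<partial>lborel)"
    using integral_density[OF mF', of "normal_density b 1"] by simp
  have bnd: "\<And>x. norm (normal_density b 1 x * F x) \<le> 0.01 * normal_density b 2 x"
    unfolding F_def using dens_bound[OF assms(3,4)] by simp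
  have i2: "integrable lborel (\<lambda>x. 0.01 * normal_density b 2 x)" by simp
  have i1: "integrable lborel (\<lambda>x. normal_density b 1 x * F x)"
  proof (rule Bochner_Integration.integrable_bound[OF i2])
    show "(\<lambda>x. normal_density b 1 x * F x) \<in> borel_measurable lborel" using mF' by measurable
    show "AE x in lborel. norm (normal_density b 1 x * F x) \<le> norm (0.01 * normal_density b 2 x)"
      using bnd by (intro AE_I2) (smt (verit) normal_density_nonneg real_norm_def)
  qed
  have "norm (\<integral>x. normal_density b 1 x * F x \<partial>lborel) \<le> (\<integral>x. 0.01 * normal_density b 2 x \<partial>lborel)"
    by (rule Bochner_Integration.integral_norm_bound_integral[OF i1 i2 bnd])
  also have "\<dots> = 0.01" by simp
  finally show ?thesis unfolding eq int_eq by simp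
qed

end
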